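(* Consider the setting and framework described in the context, with arbitrary learning rates $\alpha_k\in(0,1]$, $\alpha_1=1$, and arbitrary policy sequences. Then for all $k\ge 1$ and $h\in[H]$, $$\delta_h^k\le \sum_{t=1}^k\alpha_k^t\,\delta_{h+1}^t+\mathrm{reg}_{h+1}^k .$$ Suppose moreover that $\alpha_k=\frac{H+1}{H+k}$ for all $k\ge1$, and that $(\mathrm{reg}^k)_{k\ge1}$ is a sequence of nonnegative reals, non-increasing in $k$, with $\mathrm{reg}^k\ge \mathrm{reg}_h^k$ for all $h\in[H+1]$ and $k\ge 1$. Then for all $k\ge1$ and $h\in[H+1]$, $$\delta_h^k\le \frac{2H}{k}\sum_{t=1}^k \mathrm{reg}^t .$$
   Context: Setting. A finite-horizon two-player zero-sum Markov game with finite state set $\mathcal S$, finite action sets $\mathcal A$ (max-player, $A=|\mathcal A|$) and $\mathcal B$ (min-player, $B=|\mathcal B|$), horizon $H\ge 1$, reward functions $r_h:\mathcal S\times\mathcal A\times\mathcal B\to[0,1]$ and transition kernels $\mathbb P_h(\cdot\mid s,a,b)$ on $\mathcal S$, $h\in[H]$. For $f:\mathcal S\to\mathbb R$, $[\mathbb P_h f](s,a,b)=\sum_{s'}\mathbb P_h(s'\mid s,a,b)f(s')$. For $Q:\mathcal A\times\mathcal B\to\mathbb R$, $x\in\Delta_{\mathcal A}$, $y\in\Delta_{\mathcal B}$, write $\langle Q,x\times y\rangle=\sum_{a,b}x(a)y(b)Q(a,b)$. Optimal values: $Q^\star_{H+1}\equiv 0$, and for $h=H,\dots,1$, $V^\star_{h+1}(s)=\max_{x\in\Delta_{\mathcal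 A}}\min_{y\in\Delta_{\mathcal B}}\langle Q^\star_{h+1}(s,\cdot,\cdot),x\times y\rangle$ (with $V^\star_{H+1}\equiv0$) and $Q^\star_h=r_h+\mathbb P_hV^\star_{h+1}$. Framework. Given learning rates $\alpha_k\in(0,1]$ ($k\ge1$) with $\alpha_1=1$ and arbitrary Markov policies $\mu_h^k(\cdot\mid s)\in\Delta_{\mathcal A}$, $\nu_h^k(\cdot\mid s)\in\Delta_{\mathcal B}$ ($k\ge1$, $h\in[H]$, $s\in\mathcal S$), define $Q_{H+1}^k\equiv 0$ for all $k$, $Q_h^0\equiv H-h+1$, and for $k\ge1$, $h=H,\dots,1$: $$Q_h^k(s,a,b)=(1-\alpha_k)Q_h^{k-1}(s,a,b)+\alpha_k\Big(r_h(s,a,b)+\sum_{s'}\mathbb P_h(s'\mid s,a,b)\langle Q_{h+1}^k(s',\cdot,\cdot),\mu_{h+1}^k(\cdot\mid s')\times\nu_{h+1}^k(\cdot\mid s')\rangle\Big)$$ (for $h=H$ the inner product term is $0$). Let $\alpha_k^t=\alpha_t\prod_{j=t+1}^k(1-\alpha_j)$ for $1\le t\le k$. Weighted regrets: for $h\in[H]$, $\mathrm{reg}_{h,\mu}^k(s)=\max_{z\in\Delta_{\mathcal A}}\sum_{t=1}^k\alpha_k^t\langle Q_h^t(s,\cdot,\cdot),z\times\nu_h^t(\cdot|s)\rangle-\sum_{t=1}^k\alpha_k^t\langle Q_h^t(s,\cdot,\cdot),\mu_h^t(\cdot|s)\times\nu_h^t(\cdot|s)\rangle$, $\mathrm{reg}_{h,\nu}^k(s)=\sum_{t=1}^k\alpha_k^t\langle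 Q_h^t(s,\cdot,\cdot),\mu_h^t(\cdot|s)\times\nu_h^t(\cdot|s)\rangle-\min_{z\in\Delta_{\mathcal B}}\sum_{t=1}^k\alpha_k^t\langle Q_h^t(s,\cdot,\cdot),\mu_h^t(\cdot|s)\times z\rangle$, $\mathrm{reg}_h^k=\max_{s}\max\{\mathrm{reg}_{h,\mu}^k(s),\mathrm{reg}_{h,\nu}^k(s)\}$, and $\mathrm{reg}_{H+1}^k:=0$. Value estimation error: $\delta_h^k=\max_{s,a,b}|Q_h^k(s,a,b)-Q_h^\star(s,a,b)|$ (so $\delta_{H+1}^k=0$). *)

theory Defs
  imports Complex_Main
begin

definition simplex :: "('x::finite \<Rightarrow> real) set" where
  "simplex = {x. (\<forall>i. 0 \<le> x i) \<and> sum x UNIV = 1}"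

definition ip :: "('a::finite \<Rightarrow> 'b::finite \<Rightarrow> real) \<Rightarrow> ('a \<Rightarrow> real) \<Rightarrow> ('b \<Rightarrow> real) \<Rightarrow> real" where
  "ip Q x y = (\<Sum>a\<in>UNIV. \<Sum>b\<in>UNIV. x a * y b * Q a b)"

definition game_value :: "('a::finite \<Rightarrow> 'b::finite \<Rightarrow> real) \<Rightarrow> real" where
  "game_value Q = (SUP x\<in>simplex. INF y\<in>simplex. ip Q x y)"

text \<open>Optimal Q-values by backward induction; the first nat is the number of
  remaining steps.\<close>
primrec qs :: "(nat \<Rightarrow> 's::finite \<Rightarrow> 'a::finite \<Rightarrow> 'b::finite \<Rightarrow> real) \<Rightarrow>
    (nat \<Rightarrow> 's \<Rightarrow> 'a \<Rightarrow> 'b \<Rightarrow> 's \<Rightarrow> real) \<Rightarrow> nat \<Rightarrow> nat \<Rightarrow> 's \<Rightarrow> 'a \<Rightarrow> 'b \<Rightarrow> real" where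
  "qs r P 0 h = (\<lambda>s a b. 0)"
| "qs r P (Suc n) h = (\<lambda>s a b. r h s a b +
      (\<Sum>s'\<in>UNIV. P h s a b s' * game_value (qs r P n (Suc h) s')))"

definition Qstar :: "nat \<Rightarrow> (nat \<Rightarrow> 's::finite \<Rightarrow> 'a::finite \<Rightarrow> 'b::finite \<Rightarrow> real) \<Rightarrow>
    (nat \<Rightarrow> 's \<Rightarrow> 'a \<Rightarrow> 'b \<Rightarrow> 's \<Rightarrow> real) \<Rightarrow> nat \<Rightarrow> 's \<Rightarrow> 'a \<Rightarrow> 'b \<Rightarrow> real" where
  "Qstar H r P h = qs r P (H + 1 - h) h"

definition wt :: "(nat \<Rightarrow> real) \<Rightarrow> nat \<Rightarrow> nat \<Rightarrow> real" where
  "wt alpha k t = alpha t * (\<Prod>j\<in>{t+1..k}. (1 - alpha j))"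

definition reg_mu :: "(nat \<Rightarrow> real) \<Rightarrow> (nat \<Rightarrow> nat \<Rightarrow> 's \<Rightarrow> 'a::finite \<Rightarrow> 'b::finite \<Rightarrow> real) \<Rightarrow>
    (nat \<Rightarrow> nat \<Rightarrow> 's \<Rightarrow> 'a \<Rightarrow> real) \<Rightarrow> (nat \<Rightarrow> nat \<Rightarrow> 's \<Rightarrow> 'b \<Rightarrow> real) \<Rightarrow>
    nat \<Rightarrow> nat \<Rightarrow> 's \<Rightarrow> real" where
  "reg_mu alpha Q mu nu k h s =
     (SUP z\<in>simplex. \<Sum>t=1..k. wt alpha k t * ip (Q t h s) z (nu t h s))
     - (\<Sum>t=1..k. wt alpha k t * ip (Q t h s) (mu t h s) (nu t h s))"

definition reg_nu :: "(nat \<Rightarrow> real) \<Rightarrow> (nat \<Rightarrow> nat \<Rightarrow> 's \<Rightarrow> 'a::finite \<Rightarrow> 'b::finite \<Rightarrow> real) \<Rightarrow>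
    (nat \<Rightarrow> nat \<Rightarrow> 's \<Rightarrow> 'a \<Rightarrow> real) \<Rightarrow> (nat \<Rightarrow> nat \<Rightarrow> 's \<Rightarrow> 'b \<Rightarrow> real) \<Rightarrow>
    nat \<Rightarrow> nat \<Rightarrow> 's \<Rightarrow> real" where
  "reg_nu alpha Q mu nu k h s =
     (\<Sum>t=1..k. wt alpha k t * ip (Q t h s) (mu t h s) (nu t h s))
     - (INF z\<in>simplex. \<Sum>t=1..k. wt alpha k t * ip (Q t h s) (mu t h s) z)"

definition reg :: "nat \<Rightarrow> (nat \<Rightarrow> real) \<Rightarrow> (nat \<Rightarrow> nat \<Rightarrow> 's::finite \<Rightarrow> 'a::finite \<Rightarrow> 'b::finite \<Rightarrow> real) \<Rightarrow>
    (nat \<Rightarrow> nat \<Rightarrow> 's \<Rightarrow> 'a \<Rightarrow> real) \<Rightarrow> (nat \<Rightarrow> nat \<Rightarrow> 's \<Rightarrow> 'b \<Rightarrow> real) \<Rightarrow>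
    nat \<Rightarrow> nat \<Rightarrow> real" where
  "reg H alpha Q mu nu k h =
     (if 1 \<le> h \<and> h \<le> H
      then Max (range (\<lambda>s. max (reg_mu alpha Q mu nu k h s) (reg_nu alpha Q mu nu k h s)))
      else 0)"

definition delta :: "nat \<Rightarrow> (nat \<Rightarrow> 's::finite \<Rightarrow> 'a::finite \<Rightarrow> 'b::finite \<Rightarrow> real) \<Rightarrow>
    (nat \<Rightarrow> 's \<Rightarrow> 'a \<Rightarrow> 'b \<Rightarrow> 's \<Rightarrow> real) \<Rightarrow> (nat \<Rightarrow> nat \<Rightarrow> 's \<Rightarrow> 'a \<Rightarrow> 'b \<Rightarrow> real) \<Rightarrow>
    nat \<Rightarrow> nat \<Rightarrow> real" where
  "delta H r P Q k h =
     Max (range (\<lambda>(s, a, b). \<bar>Q k h s a b - Qstar H r P h s a b\<bar>))"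

end

theory Submission imports Defs begin

lemma simplex_nonempty: "(simplex :: ('x::finite \<Rightarrow> real) set) \<noteq> {}"
proof -
  have "((\<lambda>_. 1 / real (card (UNIV::'x set))) :: 'x \<Rightarrow> real) \<in> simplex"
    unfolding simplex_def by auto
  thus ?thesis by blast
qed

lemma ip_bound:
  assumes x: "x \<in> simplex" and y: "y \<in> simplex" and M: "\<And>a b. \<bar>Q a b\<bar> \<le> M"
  shows "\<bar>ip Q x y\<bar> \<le> M"
proof -
  have x0: "\<And>a. 0 \<le> x a" and xs: "sum x UNIV = 1" using x by (auto simp: simplex_def)
  have y0: "\<And>b. 0 \<le> y b" and ys: "sum y UNIV = 1" using y by (auto simp: simplex_def)
  have "\<bar>ip Q x y\<bar> \<le> (\<Sum>a\<in>UNIV. \<Sum>b\<in>UNIV. \<bar>x a * y b * Q a b\<bar>)"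
    unfolding ip_def by (rule order.trans[OF sum_abs sum_mono]) (rule sum_abs)
  also have "\<dots> \<le> (\<Sum>a\<in>UNIV. \<Sum>b\<in>UNIV. x a * y b * M)"
    by (intro sum_mono) (simp add: abs_mult x0 y0 M mult_left_mono)
  also have "\<dots> = M"
    by (simp add: sum_distrib_left[symmetric] sum_distrib_right[symmetric] xs ys mult.assoc)
  finally show ?thesis .
qed

lemma ip_diff: "ip Q1 x y - ip Q2 x y = ip (\<lambda>a b. Q1 a b - Q2 a b) x y"
  unfolding ip_def by (simp add: sum_subtractf[symmetric] algebra_simps)

lemma ip_zero: "ip (\<lambda>a b. 0) x y = 0" unfolding ip_def by simp

lemma ip_lin_x: "(\<Sum>t\<in>T. w t * ip Q (xs t) y) = ip Q (\<lambda>a. \<Sum>t\<in>T. w t * xs t a) y"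
  unfolding ip_def
  by (simp add: sum_distrib_left sum_distrib_right mult.assoc mult.left_commute sum.swap[of _ T])

lemma ip_lin_y: "(\<Sum>t\<in>T. w t * ip Q x (ys t)) = ip Q x (\<lambda>b. \<Sum>t\<in>T. w t * ys t b)"
  unfolding ip_def
  by (simp add: sum_distrib_left sum_distrib_right mult.assoc mult.left_commute sum.swap[of _ T])

lemma simplex_comb:
  assumes "finite T" "\<And>t. t \<in> T \<Longrightarrow> 0 \<le> w t" "sum w T = 1" "\<And>t. t \<in> T \<Longrightarrow> xs t \<in> simplex"
  shows "(\<lambda>a. \<Sum>t\<in>T. w t * xs t a) \<in> simplex"
proof -
  have "(\<Sum>a\<in>UNIV. \<Sum>t\<in>T. w t * xs t a) = (\<Sum>t\<in>T. w t * (\<Sum>a\<in>UNIV. xs t a))"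
    by (simp add: sum.swap[of _ T] sum_distrib_left)
  also have "\<dots> = sum w T" using assms(4) by (simp add: simplex_def)
  finally show ?thesis using assms unfolding simplex_def
    by (auto intro!: sum_nonneg)
qed

lemma ip_absbound:
  assumes "x \<in> simplex" "y \<in> simplex"
  shows "\<bar>ip Q x y\<bar> \<le> (\<Sum>a\<in>UNIV. \<Sum>b\<in>UNIV. \<bar>Q a b\<bar>)"
proof (rule ip_bound[OF assms])
  fix a b
  have "\<bar>Q a b\<bar> \<le> (\<Sum>b\<in>UNIV. \<bar>Q a b\<bar>)" by (rule member_le_sum) auto
  also have "\<dots> \<le> (\<Sum>a\<in>UNIV. \<Sum>b\<in>UNIV. \<bar>Q a b\<bar>)" by (rule member_le_sum) (auto intro: sum_nonneg)
  finally show "\<bar>Q a b\<bar> \<le> (\<Sum>a\<in>UNIV. \<Sum>b\<in>UNIV. \<bar>Q a b\<bar>)" .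
qed

lemma wt_Suc: "t \<le> k \<Longrightarrow> wt alpha (Suc k) t = wt alpha k t * (1 - alpha (Suc k))"
  unfolding wt_def by (simp add: prod.nat_ivl_Suc' mult_ac)

lemma wt_self: "wt alpha k k = alpha k" unfolding wt_def by simp

lemma wt_sum_Suc:
  "(\<Sum>t=1..Suc k. wt alpha (Suc k) t * f t) = (1 - alpha (Suc k)) * (\<Sum>t=1..k. wt alpha k t * f t) + alpha (Suc k) * f (Suc k)"
proof -
  have "(\<Sum>t=1..k. wt alpha (Suc k) t * f t) = (\<Sum>t=1..k. (1 - alpha (Suc k)) * (wt alpha k t * f t))"
    by (rule sum.cong) (auto simp: wt_Suc)
  thus ?thesis by (simp add: wt_self sum_distrib_left)
qed

lemma wt_nonneg:
  assumes "\<And>k. 1 \<le> k \<Longrightarrow> 0 < alpha k \<and> alpha k \<le> 1" "1 \<le> t"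
  shows "0 \<le> wt alpha k t"
  unfolding wt_def using assms by (auto intro!: prod_nonneg mult_nonneg_nonneg simp: less_imp_le)

lemma wsum_bound:
  fixes w f B :: "'t \<Rightarrow> real"
  assumes "\<And>t. t \<in> T \<Longrightarrow> 0 \<le> w t" "\<And>t. t \<in> T \<Longrightarrow> \<bar>f t\<bar> \<le> B t"
  shows "\<bar>\<Sum>t\<in>T. w t * f t\<bar> \<le> (\<Sum>t\<in>T. w t * B t)"
proof -
  have "\<bar>\<Sum>t\<in>T. w t * f t\<bar> \<le> (\<Sum>t\<in>T. \<bar>w t * f t\<bar>)" by (rule sum_abs[of "\<lambda>t. w t * f t"])
  also have "\<dots> \<le> (\<Sum>t\<in>T. w t * B t)"
    by (rule sum_mono) (simp add: abs_mult assms mult_left_mono)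
  finally show ?thesis .
qed

lemma ip_close:
  assumes "x \<in> simplex" "y \<in> simplex" "\<And>a b. \<bar>Q1 a b - Q2 a b\<bar> \<le> M"
  shows "\<bar>ip Q1 x y - ip Q2 x y\<bar> \<le> M"
  unfolding ip_diff by (rule ip_bound[OF assms])

lemma game_value_zero: "game_value (\<lambda>(a::'a::finite) (b::'b::finite). 0) = 0"
  unfolding game_value_def ip_zero
  using simplex_nonempty[where 'x='a] simplex_nonempty[where 'x='b] by simp

lemma per_state:
  fixes Qt :: "nat \<Rightarrow> 'a::finite \<Rightarrow> 'b::finite \<Rightarrow> real" and Qs :: "'a \<Rightarrow> 'b \<Rightarrow> real"
  assumes T: "finite T" and w0: "\<And>t. t \<in> T \<Longrightarrow> 0 \<le> w t" and w1: "sum w T = 1"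
    and mus: "\<And>t. t \<in> T \<Longrightarrow> mus t \<in> simplex" and nus: "\<And>t. t \<in> T \<Longrightarrow> nus t \<in> simplex"
    and d: "\<And>t a b. t \<in> T \<Longrightarrow> \<bar>Qt t a b - Qs a b\<bar> \<le> d t"
  shows "(\<Sum>t\<in>T. w t * ip (Qt t) (mus t) (nus t)) - game_value Qs \<le> (\<Sum>t\<in>T. w t * d t)
            + ((\<Sum>t\<in>T. w t * ip (Qt t) (mus t) (nus t)) - (INF z\<in>simplex. \<Sum>t\<in>T. w t * ip (Qt t) (mus t) z))"
    and "game_value Qs - (\<Sum>t\<in>T. w t * ip (Qt t) (mus t) (nus t)) \<le> (\<Sum>t\<in>T. w t * d t)
            + ((SUP z\<in>simplex. \<Sum>t\<in>T. w t * ip (Qt t) z (nus t)) - (\<Sum>t\<in>T. w t * ip (Qt t) (mus t) (nus t)))"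
proof -
  define D where "D = (\<Sum>t\<in>T. w t * d t)"
  define Bs where "Bs = (\<Sum>a\<in>UNIV. \<Sum>b\<in>UNIV. \<bar>Qs a b\<bar>)"
  define B where "B = (\<lambda>t. \<Sum>a\<in>UNIV. \<Sum>b\<in>UNIV. \<bar>Qt t a b\<bar>)"
  define F where "F = (\<lambda>z. \<Sum>t\<in>T. w t * ip (Qt t) (mus t) z)"
  define Fm where "Fm = (\<lambda>z. \<Sum>t\<in>T. w t * ip (Qt t) z (nus t))"
  define mub where "mub = (\<lambda>a. \<Sum>t\<in>T. w t * mus t a)"
  define nub where "nub = (\<lambda>a. \<Sum>t\<in>T. w t * nus t a)"
  have mub: "mub \<in> simplex" unfolding mub_def by (rule simplex_comb[OF T w0 w1 mus])
  have nub: "nub \<in> simplex" unfolding nub_def by (rule simplex_comb[OF T w0 w1 nus])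
  have ne: "(simplex :: ('b \<Rightarrow> real) set) \<noteq> {}" "(simplex :: ('a \<Rightarrow> real) set) \<noteq> {}"
    by (rule simplex_nonempty)+
  have Fb: "\<bar>F z\<bar> \<le> (\<Sum>t\<in>T. w t * B t)" if "z \<in> simplex" for z
    unfolding F_def B_def by (rule wsum_bound[OF w0 ip_absbound[OF mus that]])
  have Fmb: "\<bar>Fm z\<bar> \<le> (\<Sum>t\<in>T. w t * B t)" if "z \<in> simplex" for z
    unfolding Fm_def B_def by (rule wsum_bound[OF w0 ip_absbound[OF that nus]])
  have bF: "bdd_below (F ` simplex)"
    by (rule bdd_belowI[where m="- (\<Sum>t\<in>T. w t * B t)"]) (use Fb in force)
  have bFm: "bdd_above (Fm ` simplex)"
    by (rule bdd_aboveI[where M="(\<Sum>t\<in>T. w t * B t)"]) (use Fmb in force)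
  have bs: "bdd_below ((\<lambda>y. ip Qs x y) ` simplex)" if "x \<in> simplex" for x
    by (rule bdd_belowI[where m="- Bs"]) (use ip_absbound[OF that, of _ Qs] in \<open>force simp: Bs_def\<close>)
  have bG: "bdd_above ((\<lambda>x. INF y\<in>simplex. ip Qs x y) ` simplex)"
  proof (rule bdd_aboveI[where M=Bs], clarsimp)
    fix x :: "'a \<Rightarrow> real" assume x: "x \<in> simplex"
    obtain y :: "'b \<Rightarrow> real" where y: "y \<in> simplex" using ne by blast
    have "(INF y\<in>simplex. ip Qs x y) \<le> ip Qs x y" by (rule cINF_lower[OF bs[OF x] y])
    also have "\<dots> \<le> Bs" using ip_absbound[OF x y, of Qs] by (simp add: Bs_def)
    finally show "(INF y\<in>simplex. ip Qs x y) \<le> Bs" .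
  qed
  have "(INF z\<in>simplex. F z) - D \<le> (INF z\<in>simplex. ip Qs mub z)"
  proof (rule cINF_greatest[OF ne(1)])
    fix z :: "'b \<Rightarrow> real" assume z: "z \<in> simplex"
    have "(INF z\<in>simplex. F z) \<le> F z" by (rule cINF_lower[OF bF z])
    also have "F z \<le> (\<Sum>t\<in>T. w t * (ip Qs (mus t) z + d t))"
      unfolding F_def
    proof (rule sum_mono)
      fix t assume t: "t \<in> T"
      have "\<bar>ip (Qt t) (mus t) z - ip Qs (mus t) z\<bar> \<le> d t"
        by (rule ip_close[OF mus[OF t] z d[OF t]])
      thus "w t * ip (Qt t) (mus t) z \<le> w t * (ip Qs (mus t) z + d t)"
        by (intro mult_left_mono w0[OF t]) linarith
    qed
    also have "\<dots> = ip Qs mub z + D"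
      by (simp add: distrib_left sum.distrib D_def mub_def ip_lin_x)
    finally show "(INF z\<in>simplex. F z) - D \<le> ip Qs mub z" by simp
  qed
  also have "\<dots> \<le> game_value Qs"
    unfolding game_value_def by (rule cSUP_upper[OF mub bG])
  finally show "(\<Sum>t\<in>T. w t * ip (Qt t) (mus t) (nus t)) - game_value Qs \<le> (\<Sum>t\<in>T. w t * d t)
            + ((\<Sum>t\<in>T. w t * ip (Qt t) (mus t) (nus t)) - (INF z\<in>simplex. \<Sum>t\<in>T. w t * ip (Qt t) (mus t) z))"
    unfolding F_def D_def by simp
  have "game_value Qs \<le> (SUP z\<in>simplex. Fm z) + D"
    unfolding game_value_def
  proof (rule cSUP_least[OF ne(2)])
    fix x :: "'a \<Rightarrow> real" assume x: "x \<in> simplex"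
    have "(INF y\<in>simplex. ip Qs x y) \<le> ip Qs x nub" by (rule cINF_lower[OF bs[OF x] nub])
    also have "\<dots> = (\<Sum>t\<in>T. w t * ip Qs x (nus t))" by (simp add: nub_def ip_lin_y)
    also have "\<dots> \<le> (\<Sum>t\<in>T. w t * (ip (Qt t) x (nus t) + d t))"
    proof (rule sum_mono)
      fix t assume t: "t \<in> T"
      have "\<bar>ip (Qt t) x (nus t) - ip Qs x (nus t)\<bar> \<le> d t"
        by (rule ip_close[OF x nus[OF t] d[OF t]])
      thus "w t * ip Qs x (nus t) \<le> w t * (ip (Qt t) x (nus t) + d t)"
        by (intro mult_left_mono w0[OF t]) linarith
    qed
    also have "\<dots> = Fm x + D" by (simp add: distrib_left sum.distrib D_def Fm_def)
    also have "\<dots> \<le> (SUP z\<in>simplex. Fm z) + D" using cSUP_upper[OF x bFm] by simp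
    finally show "(INF y\<in>simplex. ip Qs x y) \<le> (SUP z\<in>simplex. Fm z) + D" .
  qed
  thus "game_value Qs - (\<Sum>t\<in>T. w t * ip (Qt t) (mus t) (nus t)) \<le> (\<Sum>t\<in>T. w t * d t)
            + ((SUP z\<in>simplex. \<Sum>t\<in>T. w t * ip (Qt t) z (nus t)) - (\<Sum>t\<in>T. w t * ip (Qt t) (mus t) (nus t)))"
    unfolding Fm_def D_def by simp
qed

lemma Qstar_last: "Qstar H r P (H + 1) s a b = 0"
  unfolding Qstar_def by simp

lemma Qstar_step: "h \<le> H \<Longrightarrow> Qstar H r P h s a b =
   r h s a b + (\<Sum>s'\<in>UNIV. P h s a b s' * game_value (Qstar H r P (h + 1) s'))"
proof -
  assume "h \<le> H"
  hence "H + 1 - h = Suc (H + 1 - (h + 1))" by simp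
  thus ?thesis unfolding Qstar_def by simp
qed

lemma delta_ge: "\<bar>Q k h s a b - Qstar H r P h s a b\<bar> \<le> delta H r P Q k h"
  unfolding delta_def by (rule Max_ge) (auto intro!: image_eqI[where x="(s,a,b)"])

lemma delta_le: "(\<And>s a b. \<bar>Q k h s a b - Qstar H r P h s a b\<bar> \<le> M) \<Longrightarrow> delta H r P Q k h \<le> M"
  unfolding delta_def by (subst Max_le_iff) auto

lemma delta_nonneg: "0 \<le> delta H r P Q k h"
  using delta_ge[of Q k h] by (meson abs_ge_zero order.trans)

lemma reg_ge:
  assumes "1 \<le> g" "g \<le> H"
  shows "reg_nu alpha Q mu nu k g s \<le> reg H alpha Q mu nu k g"
    and "reg_mu alpha Q mu nu k g s \<le> reg H alpha Q mu nu k g"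
proof -
  have "max (reg_mu alpha Q mu nu k g s) (reg_nu alpha Q mu nu k g s) \<le> reg H alpha Q mu nu k g"
    unfolding reg_def using assms
    by (simp only: if_True simp_thms) (rule Max_ge, simp, rule rangeI)
  thus "reg_nu alpha Q mu nu k g s \<le> reg H alpha Q mu nu k g"
    "reg_mu alpha Q mu nu k g s \<le> reg H alpha Q mu nu k g" by auto
qed

lemma part1:
  fixes H :: nat
    and r :: "nat \<Rightarrow> 's::finite \<Rightarrow> 'a::finite \<Rightarrow> 'b::finite \<Rightarrow> real"
    and P :: "nat \<Rightarrow> 's \<Rightarrow> 'a \<Rightarrow> 'b \<Rightarrow> 's \<Rightarrow> real"
    and alpha :: "nat \<Rightarrow> real"
    and mu :: "nat \<Rightarrow> nat \<Rightarrow> 's \<Rightarrow> 'a \<Rightarrow> real"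
    and nu :: "nat \<Rightarrow> nat \<Rightarrow> 's \<Rightarrow> 'b \<Rightarrow> real"
    and Q :: "nat \<Rightarrow> nat \<Rightarrow> 's \<Rightarrow> 'a \<Rightarrow> 'b \<Rightarrow> real"
  assumes H: "1 \<le> H"
    and r_range: "\<And>h s a b. 1 \<le> h \<Longrightarrow> h \<le> H \<Longrightarrow> 0 \<le> r h s a b \<and> r h s a b \<le> 1"
    and P_dist: "\<And>h s a b. 1 \<le> h \<Longrightarrow> h \<le> H \<Longrightarrow> P h s a b \<in> simplex"
    and alpha_range: "\<And>k. 1 \<le> k \<Longrightarrow> 0 < alpha k \<and> alpha k \<le> 1"
    and alpha1: "alpha 1 = 1"
    and mu_pol: "\<And>k h s. 1 \<le> k \<Longrightarrow> 1 \<le> h \<Longrightarrow> h \<le> H \<Longrightarrow> mu k h s \<in> simplex"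
    and nu_pol: "\<And>k h s. 1 \<le> k \<Longrightarrow> 1 \<le> h \<Longrightarrow> h \<le> H \<Longrightarrow> nu k h s \<in> simplex"
    and Q_last: "\<And>k s a b. Q k (H + 1) s a b = 0"
    and Q_init: "\<And>h s a b. 1 \<le> h \<Longrightarrow> h \<le> H \<Longrightarrow> Q 0 h s a b = real (H - h + 1)"
    and Q_step: "\<And>k h s a b. 1 \<le> k \<Longrightarrow> 1 \<le> h \<Longrightarrow> h \<le> H \<Longrightarrow>
        Q k h s a b = (1 - alpha k) * Q (k - 1) h s a b
          + alpha k * (r h s a b
              + (\<Sum>s'\<in>UNIV. P h s a b s' * ip (Q k (h + 1) s') (mu k (h + 1) s') (nu k (h + 1) s')))"
  assumes k: "1 \<le> k" and h: "1 \<le> h" "h \<le> H"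
  shows "delta H r P Q k h \<le> (\<Sum>t=1..k. wt alpha k t * delta H r P Q t (h + 1))
                                 + reg H alpha Q mu nu k (h + 1)"
proof -
  define V where "V = (\<lambda>t s'. ip (Q t (h + 1) s') (mu t (h + 1) s') (nu t (h + 1) s'))"
  define T where "T = (\<lambda>t s a b. r h s a b + (\<Sum>s'\<in>UNIV. P h s a b s' * V t s'))"
  have w0: "\<And>t. t \<in> {1..k} \<Longrightarrow> 0 \<le> wt alpha k t"
    using wt_nonneg[OF alpha_range] by auto
  have wsum: "(\<Sum>t=1..Suc m. wt alpha (Suc m) t) = 1" for m
  proof (induction m)
    case 0 show ?case using alpha1 by (simp add: wt_self)
  next
    case (Suc m) show ?case using wt_sum_Suc[of alpha "Suc m" "\<lambda>_. 1"] Suc by simp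
  qed
  have w1: "sum (wt alpha k) {1..k} = 1" using wsum[of "k - 1"] k by simp
  have unroll: "Q (Suc m) h s a b = (\<Sum>t=1..Suc m. wt alpha (Suc m) t * T t s a b)" for m s a b
  proof (induction m)
    case 0 show ?case using Q_step[of 1 h s a b] h alpha1 by (simp add: wt_self T_def V_def)
  next
    case (Suc m)
    have "Q (Suc (Suc m)) h s a b = (1 - alpha (Suc (Suc m))) * Q (Suc m) h s a b + alpha (Suc (Suc m)) * T (Suc (Suc m)) s a b"
      using Q_step[of "Suc (Suc m)" h s a b] h by (simp add: T_def V_def)
    then show ?case using Suc wt_sum_Suc[of alpha "Suc m" "\<lambda>t. T t s a b"] by simp
  qed
  have Qk: "Q k h s a b = (\<Sum>t=1..k. wt alpha k t * T t s a b)" for s a b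
    using unroll[of "k - 1" s a b] k by simp
  define W where "W = (\<lambda>s'. \<Sum>t=1..k. wt alpha k t * V t s')"
  define G where "G = (\<lambda>s'. game_value (Qstar H r P (h + 1) s'))"
  define D where "D = (\<Sum>t=1..k. wt alpha k t * delta H r P Q t (h + 1))"
  define Rg where "Rg = reg H alpha Q mu nu k (h + 1)"
  have Dnn: "0 \<le> D" unfolding D_def using w0 delta_nonneg by (auto intro!: sum_nonneg mult_nonneg_nonneg)
  have ps: "\<bar>W s' - G s'\<bar> \<le> D + Rg" for s'
  proof (cases "h = H")
    case True
    have "W s' = 0" unfolding W_def V_def using True Q_last by (simp add: ip_def)
    moreover have "G s' = 0"
    proof -
      have "Qstar H r P (h + 1) s' = (\<lambda>a b. 0)" using True Qstar_last[of H r P] by (intro ext) simp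
      thus ?thesis unfolding G_def by (simp add: game_value_zero)
    qed
    moreover have "Rg = 0" unfolding Rg_def reg_def using True by simp
    ultimately show ?thesis using Dnn by simp
  next
    case False
    hence g: "1 \<le> h + 1" "h + 1 \<le> H" using h by auto
    have mus: "\<And>t. t \<in> {1..k} \<Longrightarrow> mu t (h + 1) s' \<in> simplex" using mu_pol g by auto
    have nus: "\<And>t. t \<in> {1..k} \<Longrightarrow> nu t (h + 1) s' \<in> simplex" using nu_pol g by auto
    note PS = per_state[of "{1..k}" "wt alpha k" "\<lambda>t. mu t (h + 1) s'" "\<lambda>t. nu t (h + 1) s'"
        "\<lambda>t. Q t (h + 1) s'" "Qstar H r P (h + 1) s'" "\<lambda>t. delta H r P Q t (h + 1)",
        OF finite_atLeastAtMost w0 w1 mus nus delta_ge]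
    have "W s' - G s' \<le> D + Rg" using PS(1) reg_ge(1)[OF g, of alpha Q mu nu k s']
      unfolding W_def G_def D_def Rg_def reg_nu_def V_def by linarith
    moreover have "G s' - W s' \<le> D + Rg" using PS(2) reg_ge(2)[OF g, of alpha Q mu nu k s']
      unfolding W_def G_def D_def Rg_def reg_mu_def V_def by linarith
    ultimately show ?thesis by linarith
  qed
  show ?thesis unfolding D_def[symmetric] Rg_def[symmetric]
  proof (rule delta_le)
    fix s a b
    have p0: "\<And>s'. 0 \<le> P h s a b s'" and p1: "sum (P h s a b) UNIV = 1"
      using P_dist[OF h] by (auto simp: simplex_def)
    have "Q k h s a b = (\<Sum>t=1..k. wt alpha k t) * r h s a b + (\<Sum>s'\<in>UNIV. P h s a b s' * W s')"
      unfolding Qk T_def W_def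
      by (simp add: distrib_left sum.distrib sum_distrib_left sum_distrib_right mult_ac) (rule sum.swap)
    also have "\<dots> = r h s a b + (\<Sum>s'\<in>UNIV. P h s a b s' * W s')" using w1 by simp
    finally have "Q k h s a b - Qstar H r P h s a b = (\<Sum>s'\<in>UNIV. P h s a b s' * (W s' - G s'))"
      using Qstar_step[OF h(2), of r P s a b] by (simp add: G_def sum_subtractf right_diff_distrib)
    also have "\<bar>\<dots>\<bar> \<le> (\<Sum>s'\<in>UNIV. P h s a b s' * (D + Rg))"
      by (rule wsum_bound) (auto simp: p0 ps)
    also have "\<dots> = D + Rg" by (simp add: sum_distrib_right[symmetric] p1)
    finally show "\<bar>Q k h s a b - Qstar H r P h s a b\<bar> \<le> D + Rg" .
  qed
qed

lemma avg_bound: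
  fixes H :: nat and S :: "nat \<Rightarrow> real"
  assumes H: "1 \<le> H" and al: "\<And>k. 1 \<le> k \<Longrightarrow> alpha k = (real H + 1) / (real H + real k)"
    and S0: "\<And>k. 0 \<le> S k" and Sm: "\<And>k. S k \<le> S (Suc k)"
  shows "(\<Sum>t=1..Suc m. wt alpha (Suc m) t * (S t / real t)) \<le> (real H + 1) / real H * S (Suc m) / real (Suc m)"
proof (induction m)
  case 0
  have "alpha 1 = 1" using al[of 1] by simp
  thus ?case using H S0[of 1] by (simp add: wt_self field_simps)
next
  case (Suc m)
  define K where "K = real (Suc m)"
  define F where "F = (\<Sum>t=1..Suc m. wt alpha (Suc m) t * (S t / real t))"
  have K: "0 < K" unfolding K_def by simp
  have Hp: "0 < real H" using H by simp
  have a: "alpha (Suc (Suc m)) = (real H + 1) / (real H + K + 1)" using al[of "Suc (Suc m)"]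
    by (simp add: K_def add.assoc)
  have a1: "1 - alpha (Suc (Suc m)) = K / (real H + K + 1)" using a K Hp by (simp add: field_simps)
  have IH: "F \<le> (real H + 1) / real H * S (Suc m) / K" using Suc by (simp add: F_def K_def)
  have SS: "S (Suc m) \<le> S (Suc (Suc m))" by (rule Sm)
  have "(\<Sum>t=1..Suc (Suc m). wt alpha (Suc (Suc m)) t * (S t / real t))
     = K / (real H + K + 1) * F + (real H + 1) / (real H + K + 1) * (S (Suc (Suc m)) / (K + 1))"
  proof -
    have "real (Suc (Suc m)) = K + 1" by (simp add: K_def)
    moreover have "(\<Sum>t=1..Suc (Suc m). wt alpha (Suc (Suc m)) t * (S t / real t))
      = (1 - alpha (Suc (Suc m))) * F + alpha (Suc (Suc m)) * (S (Suc (Suc m)) / real (Suc (Suc m)))"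
      by (simp only: wt_sum_Suc F_def)
    moreover have a1': "1 - (real H + 1) / (real H + K + 1) = K / (real H + K + 1)" using a1 a by simp
    ultimately show ?thesis by (simp only: a a1')
  qed
  also have "\<dots> \<le> K / (real H + K + 1) * ((real H + 1) / real H * S (Suc (Suc m)) / K)
       + (real H + 1) / (real H + K + 1) * (S (Suc (Suc m)) / (K + 1))"
  proof -
    have "F \<le> (real H + 1) / real H * S (Suc (Suc m)) / K"
      using IH SS K Hp by (smt (verit) divide_right_mono mult_left_mono divide_nonneg_nonneg of_nat_0_le_iff)
    thus ?thesis using K Hp by (intro add_right_mono mult_left_mono) auto
  qed
  also have "\<dots> = (real H + 1) / real H * S (Suc (Suc m)) / (K + 1)"
    using K Hp by (simp add: divide_simps add_pos_pos) (simp add: algebra_simps)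
  finally show ?case by (simp add: K_def)
qed

lemma q_pow_le:
  fixes H :: nat assumes "1 \<le> H" "n \<le> H"
  shows "((real H + 1) / real H) ^ n \<le> 3"
proof -
  have Hp: "0 < real H" using assms by simp
  have q: "(real H + 1) / real H = 1 + 1 / real H" using Hp by (simp add: field_simps)
  have "((real H + 1) / real H) ^ n \<le> ((real H + 1) / real H) ^ H"
    by (rule power_increasing[OF assms(2)]) (use Hp in \<open>simp add: field_simps\<close>)
  also have "\<dots> \<le> exp (1 / real H) ^ H" unfolding q
    by (rule power_mono) (use Hp in \<open>auto intro: add_nonneg_nonneg\<close>)
  also have "\<dots> = exp 1" using Hp by (simp add: exp_of_nat_mult[symmetric])
  also have "\<dots> \<le> 3" by (rule exp_le)
  finally show ?thesis .
qed

theorem mainTheorem1: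
  fixes H :: nat
    and r :: "nat \<Rightarrow> 's::finite \<Rightarrow> 'a::finite \<Rightarrow> 'b::finite \<Rightarrow> real"
    and P :: "nat \<Rightarrow> 's \<Rightarrow> 'a \<Rightarrow> 'b \<Rightarrow> 's \<Rightarrow> real"
    and alpha :: "nat \<Rightarrow> real"
    and mu :: "nat \<Rightarrow> nat \<Rightarrow> 's \<Rightarrow> 'a \<Rightarrow> real"
    and nu :: "nat \<Rightarrow> nat \<Rightarrow> 's \<Rightarrow> 'b \<Rightarrow> real"
    and Q :: "nat \<Rightarrow> nat \<Rightarrow> 's \<Rightarrow> 'a \<Rightarrow> 'b \<Rightarrow> real"
  assumes H: "1 \<le> H"
    and r_range: "\<And>h s a b. 1 \<le> h \<Longrightarrow> h \<le> H \<Longrightarrow> 0 \<le> r h s a b \<and> r h s a b \<le> 1"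
    and P_dist: "\<And>h s a b. 1 \<le> h \<Longrightarrow> h \<le> H \<Longrightarrow> P h s a b \<in> simplex"
    and alpha_range: "\<And>k. 1 \<le> k \<Longrightarrow> 0 < alpha k \<and> alpha k \<le> 1"
    and alpha1: "alpha 1 = 1"
    and mu_pol: "\<And>k h s. 1 \<le> k \<Longrightarrow> 1 \<le> h \<Longrightarrow> h \<le> H \<Longrightarrow> mu k h s \<in> simplex"
    and nu_pol: "\<And>k h s. 1 \<le> k \<Longrightarrow> 1 \<le> h \<Longrightarrow> h \<le> H \<Longrightarrow> nu k h s \<in> simplex"
    and Q_last: "\<And>k s a b. Q k (H + 1) s a b = 0"
    and Q_init: "\<And>h s a b. 1 \<le> h \<Longrightarrow> h \<le> H \<Longrightarrow> Q 0 h s a b = real (H - h + 1)"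
    and Q_step: "\<And>k h s a b. 1 \<le> k \<Longrightarrow> 1 \<le> h \<Longrightarrow> h \<le> H \<Longrightarrow>
        Q k h s a b = (1 - alpha k) * Q (k - 1) h s a b
          + alpha k * (r h s a b
              + (\<Sum>s'\<in>UNIV. P h s a b s' * ip (Q k (h + 1) s') (mu k (h + 1) s') (nu k (h + 1) s')))"
  shows "(\<forall>k h. 1 \<le> k \<longrightarrow> 1 \<le> h \<longrightarrow> h \<le> H \<longrightarrow>
            delta H r P Q k h \<le> (\<Sum>t=1..k. wt alpha k t * delta H r P Q t (h + 1))
                                 + reg H alpha Q mu nu k (h + 1))
       \<and> ((\<forall>k. 1 \<le> k \<longrightarrow> alpha k = (real H + 1) / (real H + real k)) \<longrightarrow>
          (\<forall>R :: nat \<Rightarrow> real.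
             (\<forall>k. 1 \<le> k \<longrightarrow> 0 \<le> R k)
             \<longrightarrow> (\<forall>k. 1 \<le> k \<longrightarrow> R (k + 1) \<le> R k)
             \<longrightarrow> (\<forall>k h. 1 \<le> k \<longrightarrow> 1 \<le> h \<longrightarrow> h \<le> H + 1 \<longrightarrow> reg H alpha Q mu nu k h \<le> R k)
             \<longrightarrow> (\<forall>k h. 1 \<le> k \<longrightarrow> 1 \<le> h \<longrightarrow> h \<le> H + 1 \<longrightarrow>
                   delta H r P Q k h \<le> 2 * real H / real k * (\<Sum>t=1..k. R t))))"
proof (intro conjI allI impI)
  fix k h :: nat assume a: "1 \<le> k" "1 \<le> h" "h \<le> H"
  show "delta H r P Q k h \<le> (\<Sum>t=1..k. wt alpha k t * delta H r P Q t (h + 1))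
                                 + reg H alpha Q mu nu k (h + 1)"
    by (rule part1[OF H r_range P_dist alpha_range alpha1 mu_pol nu_pol Q_last Q_init Q_step a])
next
  assume al: "\<forall>k. 1 \<le> k \<longrightarrow> alpha k = (real H + 1) / (real H + real k)"
  fix R :: "nat \<Rightarrow> real"
  assume R0: "\<forall>k. 1 \<le> k \<longrightarrow> 0 \<le> R k"
    and Rm: "\<forall>k. 1 \<le> k \<longrightarrow> R (k + 1) \<le> R k"
    and Rreg: "\<forall>k h. 1 \<le> k \<longrightarrow> 1 \<le> h \<longrightarrow> h \<le> H + 1 \<longrightarrow> reg H alpha Q mu nu k h \<le> R k"
  fix k h :: nat assume k: "1 \<le> k" and h: "1 \<le> h" "h \<le> H + 1"
  define S where "S = (\<lambda>k. \<Sum>t=1..k. R t)"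
  define q where "q = (real H + 1) / real H"
  have Hp: "0 < real H" using H by simp
  have q1: "1 \<le> q" unfolding q_def using Hp by (simp add: field_simps)
  have S0: "\<And>k. 0 \<le> S k" unfolding S_def using R0 by (auto intro!: sum_nonneg)
  have Sm: "\<And>k. S k \<le> S (Suc k)" unfolding S_def using R0 by simp
  have Ranti: "R n \<le> R t" if "1 \<le> t" "t \<le> n" for t n
    using that(2)
  proof (induction n rule: dec_induct)
    case base show ?case by simp
  next
    case (step n) thus ?case using Rm that(1) by (metis Suc_eq_plus1 order.trans)
  qed
  have RS: "R n \<le> S n / real n" if "1 \<le> n" for n
  proof -
    have "real n * R n = (\<Sum>t=1..n. R n)" by simp
    also have "\<dots> \<le> S n" unfolding S_def by (rule sum_mono) (use Ranti in auto)
    finally show ?thesis using that by (simp add: field_simps)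
  qed
  have avg: "(\<Sum>t=1..n. wt alpha n t * (S t / real t)) \<le> q * S n / real n" if "1 \<le> n" for n
  proof -
    have al': "\<And>k. 1 \<le> k \<Longrightarrow> alpha k = (real H + 1) / (real H + real k)" using al by blast
    show ?thesis using avg_bound[of H alpha S "n - 1", OF H al' S0 Sm] that by (simp add: q_def)
  qed
  have w0: "\<And>n t. 1 \<le> t \<Longrightarrow> 0 \<le> wt alpha n t" using wt_nonneg[OF alpha_range] by auto
  have claim: "\<forall>h k. H + 1 - h = n \<longrightarrow> 1 \<le> h \<longrightarrow> h \<le> H + 1 \<longrightarrow> 1 \<le> k \<longrightarrow>
      delta H r P Q k h \<le> real H * (q ^ n - 1) * (S k / real k)" for n
  proof (induction n)
    case 0
    show ?case
    proof (intro allI impI)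
      fix h k :: nat assume "H + 1 - h = 0" "1 \<le> h" "h \<le> H + 1" "1 \<le> k"
      hence hh: "h = H + 1" by simp
      show "delta H r P Q k h \<le> real H * (q ^ 0 - 1) * (S k / real k)"
        by (simp, rule delta_le) (use Q_last[of k] Qstar_last[of H r P] in \<open>simp add: hh\<close>)
    qed
  next
    case (Suc m)
    show ?case
    proof (intro allI impI)
      fix h k :: nat assume hn: "H + 1 - h = Suc m" and h1: "1 \<le> h" and "h \<le> H + 1" and k: "1 \<le> k"
      hence hH: "h \<le> H" by simp
      define c where "c = real H * (q ^ m - 1)"
      have c0: "0 \<le> c" unfolding c_def using q1 Hp by (simp add: one_le_power)
      have IH: "\<And>t. 1 \<le> t \<Longrightarrow> delta H r P Q t (h + 1) \<le> c * (S t / real t)"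
        using Suc.IH hn hH unfolding c_def by auto
      have "delta H r P Q k h \<le> (\<Sum>t=1..k. wt alpha k t * delta H r P Q t (h + 1))
                                 + reg H alpha Q mu nu k (h + 1)"
        by (rule part1[OF H r_range P_dist alpha_range alpha1 mu_pol nu_pol Q_last Q_init Q_step k h1 hH])
      also have "\<dots> \<le> (\<Sum>t=1..k. wt alpha k t * (c * (S t / real t))) + R k"
      proof (intro add_mono sum_mono mult_left_mono)
        fix t assume t: "t \<in> {1..k}"
        show "delta H r P Q t (h + 1) \<le> c * (S t / real t)" using IH t by auto
        show "0 \<le> wt alpha k t" using w0 t by auto
      next
        show "reg H alpha Q mu nu k (h + 1) \<le> R k" using Rreg k hH by auto
      qed
      also have "\<dots> = c * (\<Sum>t=1..k. wt alpha k t * (S t / real t)) + R k"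
        by (simp add: sum_distrib_left mult_ac)
      also have "\<dots> \<le> c * (q * S k / real k) + S k / real k"
        by (intro add_mono mult_left_mono avg RS k c0)
      also have "\<dots> = (c * q + 1) * (S k / real k)" by (simp add: algebra_simps add_divide_distrib)
      also have "c * q + 1 = real H * (q ^ Suc m - 1)"
        unfolding c_def using Hp by (simp add: q_def field_simps)
      finally show "delta H r P Q k h \<le> real H * (q ^ Suc m - 1) * (S k / real k)" .
    qed
  qed
  have "delta H r P Q k h \<le> real H * (q ^ (H + 1 - h) - 1) * (S k / real k)"
    using claim h k by blast
  also have "\<dots> \<le> real H * 2 * (S k / real k)"
  proof -
    have "q ^ (H + 1 - h) \<le> 3" unfolding q_def by (rule q_pow_le[OF H]) (use h in simp)
    thus ?thesis using Hp S0[of k] by (intro mult_right_mono mult_left_mono) auto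
  qed
  also have "\<dots> = 2 * real H / real k * (\<Sum>t=1..k. R t)" by (simp add: S_def)
  finally show "delta H r P Q k h \<le> 2 * real H / real k * (\<Sum>t=1..k. R t)" .
qed

end
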